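(* Let $H$ be a finite dimensional $G$-graded $G$-module. For all $b\in B_n$, $x\in(H^\ast)^{\otimes n}$ and $v\in H^{\otimes n}$, $(b\cdot x)(v)=x(r(b)\cdot v)$.
   Context: $G$ finite group. A $G$-graded $G$-module is $H=\bigoplus_{m\in G}H_m$ with a $G$-action satisfying $\gamma H_m=H_{\gamma m\gamma^{-1}}$. $H^\ast$ is a $G$-graded $G$-module via $(\gamma x)(v)=x(\gamma^{-1}v)$ and $(H^\ast)_m=(H_{m^{-1}})^\ast$. For any $G$-graded $G$-module $V$, $B_n$ (generators $b_1,\dots,b_{n-1}$) acts on $V^{\otimes n}$ by $b_i(v_1\otimes\cdots\otimes v_n)=v_1\otimes\cdots\otimes(\gamma_iv_{i+1})\otimes v_i\otimes\cdots\otimes v_n$ for $v_j\in V_{\gamma_j}$; this is applied to both $V=H$ and $V=H^\ast$. The pairing of $(H^\ast)^{\otimes n}$ with $H^{\otimes n}$ is $(x_1\otimes\cdots\otimes x_n)(v_1\otimes\cdots\otimes v_n)=x_n(v_1)x_{n-1}(v_2)\cdots x_1(v_n)$. The reflection $r:B_n\to B_n$ is the antihomomorphism with $r(b_i)=b_{n-i}$. *)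

theory Defs
  imports Complex_Main "HOL-Algebra.Group"
begin

text \<open>Braid group words: an element of B_n is represented by a word in the
generators b_i (i, True) and their inverses (i, False), 1 \<le> i \<le> n - 1.
The word [g1, ..., gk] stands for the product g1 g2 ... gk.\<close>

type_synonym bword = "(nat \<times> bool) list"

definition braid_word :: "nat \<Rightarrow> bword \<Rightarrow> bool" where
  "braid_word n w \<longleftrightarrow> (\<forall>(i, s) \<in> set w. 1 \<le> i \<and> i < n)"

definition brefl :: "nat \<Rightarrow> bword \<Rightarrow> bword" where
  "brefl n w = rev (map (\<lambda>(i, s). (n - i, s)) w)"

text \<open>A homogeneous pure tensor v_1 \<otimes> ... \<otimes> v_n of a G-graded G-module
is a list of pairs (gamma_j, v_j) with v_j of degree gamma_j.
Action of b_i (positions i, i+1, 1-indexed):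
 v_i \<otimes> v_(i+1) \<mapsto> (gamma_i v_(i+1)) \<otimes> v_i, the new degrees being
 gamma_i gamma_(i+1) gamma_i^-1 and gamma_i.\<close>
definition bgen :: "('g, 'm) monoid_scheme \<Rightarrow> ('g \<Rightarrow> 'a \<Rightarrow> 'a) \<Rightarrow> nat
    \<Rightarrow> ('g \<times> 'a) list \<Rightarrow> ('g \<times> 'a) list" where
  "bgen G act i t =
     (let (g1, v1) = t ! (i - 1); (g2, v2) = t ! i
      in t[i - 1 := (g1 \<otimes>\<^bsub>G\<^esub> g2 \<otimes>\<^bsub>G\<^esub> inv\<^bsub>G\<^esub> g1, act g1 v2), i := (g1, v1)])"

text \<open>Action of b_i^-1 (the inverse of the map above):
 v_i \<otimes> v_(i+1) \<mapsto> v_(i+1) \<otimes> (gamma_(i+1)^-1 v_i).\<close>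
definition bgen_inv :: "('g, 'm) monoid_scheme \<Rightarrow> ('g \<Rightarrow> 'a \<Rightarrow> 'a) \<Rightarrow> nat
    \<Rightarrow> ('g \<times> 'a) list \<Rightarrow> ('g \<times> 'a) list" where
  "bgen_inv G act i t =
     (let (g1, v1) = t ! (i - 1); (g2, v2) = t ! i
      in t[i - 1 := (g2, v2), i := (inv\<^bsub>G\<^esub> g2 \<otimes>\<^bsub>G\<^esub> g1 \<otimes>\<^bsub>G\<^esub> g2, act (inv\<^bsub>G\<^esub> g2) v1)])"

text \<open>Action of a braid word on a homogeneous pure tensor (rightmost letter acts first).\<close>
definition bact :: "('g, 'm) monoid_scheme \<Rightarrow> ('g \<Rightarrow> 'a \<Rightarrow> 'a) \<Rightarrow> bword
    \<Rightarrow> ('g \<times> 'a) list \<Rightarrow> ('g \<times> 'a) list" where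
  "bact G act w t = foldr (\<lambda>(i, s) u. if s then bgen G act i u else bgen_inv G act i u) w t"

text \<open>General elements of V^{\<otimes> n}: finite linear combinations of homogeneous
pure tensors; the braid action is extended linearly.\<close>
type_synonym ('k, 'g, 'a) tens = "('k \<times> ('g \<times> 'a) list) list"

definition tact :: "('g, 'm) monoid_scheme \<Rightarrow> ('g \<Rightarrow> 'a \<Rightarrow> 'a) \<Rightarrow> bword
    \<Rightarrow> ('k, 'g, 'a) tens \<Rightarrow> ('k, 'g, 'a) tens" where
  "tact G act w X = map (\<lambda>(c, t). (c, bact G act w t)) X"

definition homog_tensor :: "nat \<Rightarrow> 'g set \<Rightarrow> ('g \<Rightarrow> 'a set) \<Rightarrow> ('k, 'g, 'a) tens \<Rightarrow> bool" where
  "homog_tensor n Gc D X \<longleftrightarrow>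
     (\<forall>(c, t) \<in> set X. length t = n \<and> (\<forall>(g, v) \<in> set t. g \<in> Gc \<and> v \<in> D g))"

text \<open>The dual G-graded G-module H^*: linear functionals, (gamma x)(v) = x(gamma^-1 v),
and (H^*)_m = (H_(m^-1))^*, i.e. functionals vanishing on all H_m' with m' \<noteq> m^-1.\<close>
definition dual_act :: "('g, 'm) monoid_scheme \<Rightarrow> ('g \<Rightarrow> 'v \<Rightarrow> 'v) \<Rightarrow> 'g
    \<Rightarrow> ('v \<Rightarrow> 'k) \<Rightarrow> ('v \<Rightarrow> 'k)" where
  "dual_act G act g x = (\<lambda>v. x (act (inv\<^bsub>G\<^esub> g) v))"

definition dual_deg :: "('g, 'm) monoid_scheme \<Rightarrow> ('k::field \<Rightarrow> 'v::ab_group_add \<Rightarrow> 'v)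
    \<Rightarrow> ('g \<Rightarrow> 'v set) \<Rightarrow> 'g \<Rightarrow> ('v \<Rightarrow> 'k) set" where
  "dual_deg G scale Hd m =
     {x. Vector_Spaces.linear scale (*) x \<and>
         (\<forall>m' \<in> carrier G. m' \<noteq> inv\<^bsub>G\<^esub> m \<longrightarrow> (\<forall>v \<in> Hd m'. x v = 0))}"

definition pure_pair :: "('g \<times> ('v \<Rightarrow> 'k::comm_ring_1)) list \<Rightarrow> ('g \<times> 'v) list \<Rightarrow> 'k" where
  "pure_pair xs vs = (\<Prod>j < length vs. snd (rev xs ! j) (snd (vs ! j)))"

definition tpair :: "('k::comm_ring_1, 'g, 'v \<Rightarrow> 'k) tens \<Rightarrow> ('k, 'g, 'v) tens \<Rightarrow> 'k" where
  "tpair X V = (\<Sum>(c, xs) \<leftarrow> X. \<Sum>(d, vs) \<leftarrow> V. c * d * pure_pair xs vs)"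

end

theory Submission
  imports Defs
begin

definition dh :: "('g, 'm) monoid_scheme \<Rightarrow> ('g \<Rightarrow> 'v set) \<Rightarrow> nat \<Rightarrow> ('g \<times> ('v \<Rightarrow> 'k::zero)) list \<Rightarrow> bool" where
  "dh G Hd n xs \<longleftrightarrow> length xs = n \<and> (\<forall>j<n. fst (xs!j) \<in> carrier G \<and>
     (\<forall>m'\<in>carrier G. m' \<noteq> inv\<^bsub>G\<^esub> (fst (xs!j)) \<longrightarrow> (\<forall>v\<in>Hd m'. snd (xs!j) v = 0)))"

definition vh :: "('g, 'm) monoid_scheme \<Rightarrow> ('g \<Rightarrow> 'v set) \<Rightarrow> nat \<Rightarrow> ('g \<times> 'v) list \<Rightarrow> bool" where
  "vh G Hd n vs \<longleftrightarrow> length vs = n \<and> (\<forall>j<n. fst (vs!j) \<in> carrier G \<and> snd (vs!j) \<in> Hd (fst (vs!j)))"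

lemma prod_two:
  fixes f g :: "nat \<Rightarrow> 'k::comm_ring_1"
  assumes "p < n" "q < n" "p \<noteq> q" "\<And>j. j < n \<Longrightarrow> j \<noteq> p \<Longrightarrow> j \<noteq> q \<Longrightarrow> f j = g j"
    and "f p * f q = g p * g q"
  shows "(\<Prod>j<n. f j) = (\<Prod>j<n. g j)"
proof -
  have A: "{..<n} = insert p (insert q ({..<n} - {p,q}))" using assms by auto
  have "(\<Prod>j<n. f j) = f p * f q * (\<Prod>j\<in>{..<n} - {p,q}. f j)"
    by (subst A, simp add: assms(3) mult.assoc)
  also have "(\<Prod>j\<in>{..<n} - {p,q}. f j) = (\<Prod>j\<in>{..<n} - {p,q}. g j)"
    by (rule prod.cong) (auto intro: assms(4))
  also have "f p * f q * (\<Prod>j\<in>{..<n} - {p,q}. g j) = (\<Prod>j<n. g j)"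
    by (subst (2) A, simp add: assms(3,5) mult.assoc)
  finally show ?thesis .
qed

locale gm = group G for G :: "('g, 'm) monoid_scheme" +
  fixes act :: "'g \<Rightarrow> 'v \<Rightarrow> 'v" and Hd :: "'g \<Rightarrow> 'v set"
  assumes act_mult: "\<forall>g \<in> carrier G. \<forall>h \<in> carrier G. \<forall>v. act (g \<otimes>\<^bsub>G\<^esub> h) v = act g (act h v)"
    and act_deg: "\<forall>g \<in> carrier G. \<forall>m \<in> carrier G. act g ` Hd m = Hd (g \<otimes>\<^bsub>G\<^esub> m \<otimes>\<^bsub>G\<^esub> inv\<^bsub>G\<^esub> g)"
begin

lemma act_in: "g \<in> carrier G \<Longrightarrow> m \<in> carrier G \<Longrightarrow> v \<in> Hd m \<Longrightarrow> act g v \<in> Hd (g \<otimes>\<^bsub>G\<^esub> m \<otimes>\<^bsub>G\<^esub> inv\<^bsub>G\<^esub> g)"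
  using act_deg by blast


lemma pp_gen:
  fixes xs :: "('g \<times> ('v \<Rightarrow> 'k::comm_ring_1)) list"
  assumes x: "dh G Hd n xs" and v: "vh G Hd n vs" and i: "1 \<le> i" "i < n"
  shows "pure_pair (bgen G (dual_act G act) i xs) vs = pure_pair xs (bgen G act (n - i) vs)"
proof -
  obtain a x1 where ea: "xs!(i-1) = (a,x1)" by fastforce
  obtain b x2 where eb: "xs!i = (b,x2)" by fastforce
  define k where "k = n - i"
  have k: "1 \<le> k" "k < n" "i = n - k" using i by (auto simp: k_def)
  obtain c v1 where ec: "vs!(k-1) = (c,v1)" by fastforce
  obtain d v2 where ed: "vs!k = (d,v2)" by fastforce
  have lx: "length xs = n" and lv: "length vs = n" using x v by (auto simp: dh_def vh_def)
  have xi: "fst (xs!(i-1)) \<in> carrier G \<and> (\<forall>m'\<in>carrier G. m' \<noteq> inv\<^bsub>G\<^esub> (fst (xs!(i-1))) \<longrightarrow> (\<forall>v\<in>Hd m'. snd (xs!(i-1)) v = 0))"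
    using x i unfolding dh_def by simp
  have vi: "fst (vs!(k-1)) \<in> carrier G \<and> snd (vs!(k-1)) \<in> Hd (fst (vs!(k-1)))"
    using v k unfolding vh_def by simp
  have cc: "c \<in> carrier G" and v1: "v1 \<in> Hd c" using vi ec by auto
  have van: "c \<noteq> inv\<^bsub>G\<^esub> a \<Longrightarrow> x1 v1 = 0"
    using xi ea cc v1 by auto
  have key: "x1 v1 * x2 (act (inv\<^bsub>G\<^esub> a) v2) = x2 (act c v2) * x1 v1"
    using van by (cases "c = inv\<^bsub>G\<^esub> a") auto
  have r1: "rev xs ! (k-1) = xs ! i" using lx k by (simp add: rev_nth)
  have r2: "rev xs ! k = xs ! (i-1)" using lx k by (simp add: rev_nth)
  have bx: "bgen G (dual_act G act) i xs = xs[i - 1 := (a \<otimes>\<^bsub>G\<^esub> b \<otimes>\<^bsub>G\<^esub> inv\<^bsub>G\<^esub> a, dual_act G act a x2), i := (a, x1)]"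
    using ea eb by (simp add: bgen_def)
  have bv: "bgen G act k vs = vs[k - 1 := (c \<otimes>\<^bsub>G\<^esub> d \<otimes>\<^bsub>G\<^esub> inv\<^bsub>G\<^esub> c, act c v2), k := (c, v1)]"
    using ec ed by (simp add: bgen_def)
  show ?thesis
    unfolding pure_pair_def k_def[symmetric] bx bv length_list_update lv
  proof (rule prod_two[where p="k-1" and q=k])
    show "k - 1 < n" "k < n" "k - 1 \<noteq> k" using k by auto
  next
    fix j assume j: "j < n" "j \<noteq> k - 1" "j \<noteq> k"
    have "n - Suc j \<noteq> i - 1" "n - Suc j \<noteq> i" using j k by auto
    then show "snd (rev (xs[i - 1 := (a \<otimes>\<^bsub>G\<^esub> b \<otimes>\<^bsub>G\<^esub> inv\<^bsub>G\<^esub> a, dual_act G act a x2), i := (a, x1)]) ! j) (snd (vs ! j)) =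
         snd (rev xs ! j) (snd (vs[k - 1 := (c \<otimes>\<^bsub>G\<^esub> d \<otimes>\<^bsub>G\<^esub> inv\<^bsub>G\<^esub> c, act c v2), k := (c, v1)] ! j))"
      using j lx by (simp add: rev_nth)
  next
    show "snd (rev (xs[i - 1 := (a \<otimes>\<^bsub>G\<^esub> b \<otimes>\<^bsub>G\<^esub> inv\<^bsub>G\<^esub> a, dual_act G act a x2), i := (a, x1)]) ! (k - 1)) (snd (vs ! (k - 1))) *
    snd (rev (xs[i - 1 := (a \<otimes>\<^bsub>G\<^esub> b \<otimes>\<^bsub>G\<^esub> inv\<^bsub>G\<^esub> a, dual_act G act a x2), i := (a, x1)]) ! k) (snd (vs ! k)) =
    snd (rev xs ! (k - 1)) (snd (vs[k - 1 := (c \<otimes>\<^bsub>G\<^esub> d \<otimes>\<^bsub>G\<^esub> inv\<^bsub>G\<^esub> c, act c v2), k := (c, v1)] ! (k - 1))) *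
    snd (rev xs ! k) (snd (vs[k - 1 := (c \<otimes>\<^bsub>G\<^esub> d \<otimes>\<^bsub>G\<^esub> inv\<^bsub>G\<^esub> c, act c v2), k := (c, v1)] ! k))"
      using lx lv k r1 r2 ea eb ec ed key
      by (simp add: rev_nth dual_act_def)
  qed
qed


lemma pp_gen_inv:
  fixes xs :: "('g \<times> ('v \<Rightarrow> 'k::comm_ring_1)) list"
  assumes x: "dh G Hd n xs" and v: "vh G Hd n vs" and i: "1 \<le> i" "i < n"
  shows "pure_pair (bgen_inv G (dual_act G act) i xs) vs = pure_pair xs (bgen_inv G act (n - i) vs)"
proof -
  obtain a x1 where ea: "xs!(i-1) = (a,x1)" by fastforce
  obtain b x2 where eb: "xs!i = (b,x2)" by fastforce
  define k where "k = n - i"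
  have k: "1 \<le> k" "k < n" "i = n - k" using i by (auto simp: k_def)
  obtain c v1 where ec: "vs!(k-1) = (c,v1)" by fastforce
  obtain d v2 where ed: "vs!k = (d,v2)" by fastforce
  have lx: "length xs = n" and lv: "length vs = n" using x v by (auto simp: dh_def vh_def)
  have xi: "fst (xs!i) \<in> carrier G \<and> (\<forall>m'\<in>carrier G. m' \<noteq> inv\<^bsub>G\<^esub> (fst (xs!i)) \<longrightarrow> (\<forall>v\<in>Hd m'. snd (xs!i) v = 0))"
    using x i unfolding dh_def by simp
  have vi: "fst (vs!k) \<in> carrier G \<and> snd (vs!k) \<in> Hd (fst (vs!k))"
    using v k unfolding vh_def by simp
  have cc: "d \<in> carrier G" and v1: "v2 \<in> Hd d" using vi ed by auto
  have van: "d \<noteq> inv\<^bsub>G\<^esub> b \<Longrightarrow> x2 v2 = 0"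
    using xi eb cc v1 by auto
  have key: "x1 (act (inv\<^bsub>G\<^esub> (inv\<^bsub>G\<^esub> b)) v1) * x2 v2 = x2 v2 * x1 (act (inv\<^bsub>G\<^esub> d) v1)"
    using van by (cases "d = inv\<^bsub>G\<^esub> b") auto
  have r1: "rev xs ! (k-1) = xs ! i" using lx k by (simp add: rev_nth)
  have r2: "rev xs ! k = xs ! (i-1)" using lx k by (simp add: rev_nth)
  have bx: "bgen_inv G (dual_act G act) i xs = xs[i - 1 := (b, x2), i := (inv\<^bsub>G\<^esub> b \<otimes>\<^bsub>G\<^esub> a \<otimes>\<^bsub>G\<^esub> b, dual_act G act (inv\<^bsub>G\<^esub> b) x1)]"
    using ea eb by (simp add: bgen_inv_def)
  have bv: "bgen_inv G act k vs = vs[k - 1 := (d, v2), k := (inv\<^bsub>G\<^esub> d \<otimes>\<^bsub>G\<^esub> c \<otimes>\<^bsub>G\<^esub> d, act (inv\<^bsub>G\<^esub> d) v1)]"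
    using ec ed by (simp add: bgen_inv_def)
  show ?thesis
    unfolding pure_pair_def k_def[symmetric] bx bv length_list_update lv
  proof (rule prod_two[where p="k-1" and q=k])
    show "k - 1 < n" "k < n" "k - 1 \<noteq> k" using k by auto
  next
    fix j assume j: "j < n" "j \<noteq> k - 1" "j \<noteq> k"
    have "n - Suc j \<noteq> i - 1" "n - Suc j \<noteq> i" using j k by auto
    then show "snd (rev (xs[i - 1 := (b, x2), i := (inv\<^bsub>G\<^esub> b \<otimes>\<^bsub>G\<^esub> a \<otimes>\<^bsub>G\<^esub> b, dual_act G act (inv\<^bsub>G\<^esub> b) x1)]) ! j) (snd (vs ! j)) =
         snd (rev xs ! j) (snd (vs[k - 1 := (d, v2), k := (inv\<^bsub>G\<^esub> d \<otimes>\<^bsub>G\<^esub> c \<otimes>\<^bsub>G\<^esub> d, act (inv\<^bsub>G\<^esub> d) v1)] ! j))"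
      using j lx by (simp add: rev_nth)
  next
    show "snd (rev (xs[i - 1 := (b, x2), i := (inv\<^bsub>G\<^esub> b \<otimes>\<^bsub>G\<^esub> a \<otimes>\<^bsub>G\<^esub> b, dual_act G act (inv\<^bsub>G\<^esub> b) x1)]) ! (k - 1)) (snd (vs ! (k - 1))) *
    snd (rev (xs[i - 1 := (b, x2), i := (inv\<^bsub>G\<^esub> b \<otimes>\<^bsub>G\<^esub> a \<otimes>\<^bsub>G\<^esub> b, dual_act G act (inv\<^bsub>G\<^esub> b) x1)]) ! k) (snd (vs ! k)) =
    snd (rev xs ! (k - 1)) (snd (vs[k - 1 := (d, v2), k := (inv\<^bsub>G\<^esub> d \<otimes>\<^bsub>G\<^esub> c \<otimes>\<^bsub>G\<^esub> d, act (inv\<^bsub>G\<^esub> d) v1)] ! (k - 1))) *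
    snd (rev xs ! k) (snd (vs[k - 1 := (d, v2), k := (inv\<^bsub>G\<^esub> d \<otimes>\<^bsub>G\<^esub> c \<otimes>\<^bsub>G\<^esub> d, act (inv\<^bsub>G\<^esub> d) v1)] ! k))"
      using lx lv k r1 r2 ea eb ec ed key
      by (simp add: rev_nth dual_act_def)
  qed
qed


lemma grp1: assumes "a \<in> carrier G" "b \<in> carrier G" "m \<in> carrier G"
  and "inv\<^bsub>G\<^esub> a \<otimes>\<^bsub>G\<^esub> m \<otimes>\<^bsub>G\<^esub> inv\<^bsub>G\<^esub> (inv\<^bsub>G\<^esub> a) = inv\<^bsub>G\<^esub> b"
  shows "m = inv\<^bsub>G\<^esub> (a \<otimes>\<^bsub>G\<^esub> b \<otimes>\<^bsub>G\<^esub> inv\<^bsub>G\<^esub> a)"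
proof -
  have 1: "m = a \<otimes>\<^bsub>G\<^esub> (inv\<^bsub>G\<^esub> a \<otimes>\<^bsub>G\<^esub> m \<otimes>\<^bsub>G\<^esub> a) \<otimes>\<^bsub>G\<^esub> inv\<^bsub>G\<^esub> a"
    using assms(1-3) by (simp add: m_assoc, simp add: m_assoc[symmetric])
  have 2: "inv\<^bsub>G\<^esub> a \<otimes>\<^bsub>G\<^esub> m \<otimes>\<^bsub>G\<^esub> a = inv\<^bsub>G\<^esub> b" using assms by simp
  have "m = a \<otimes>\<^bsub>G\<^esub> inv\<^bsub>G\<^esub> b \<otimes>\<^bsub>G\<^esub> inv\<^bsub>G\<^esub> a" using 1 unfolding 2 .
  then show ?thesis using assms by (simp add: inv_mult_group m_assoc)
qed

lemma grp2: assumes "a \<in> carrier G" "b \<in> carrier G" "m \<in> carrier G"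
  and "inv\<^bsub>G\<^esub> (inv\<^bsub>G\<^esub> b) \<otimes>\<^bsub>G\<^esub> m \<otimes>\<^bsub>G\<^esub> inv\<^bsub>G\<^esub> (inv\<^bsub>G\<^esub> (inv\<^bsub>G\<^esub> b)) = inv\<^bsub>G\<^esub> a"
  shows "m = inv\<^bsub>G\<^esub> (inv\<^bsub>G\<^esub> b \<otimes>\<^bsub>G\<^esub> a \<otimes>\<^bsub>G\<^esub> b)"
proof -
  have 1: "m = inv\<^bsub>G\<^esub> b \<otimes>\<^bsub>G\<^esub> (b \<otimes>\<^bsub>G\<^esub> m \<otimes>\<^bsub>G\<^esub> inv\<^bsub>G\<^esub> b) \<otimes>\<^bsub>G\<^esub> b"
    using assms(1-3) by (simp add: inv_solve_left m_assoc)
  have 2: "b \<otimes>\<^bsub>G\<^esub> m \<otimes>\<^bsub>G\<^esub> inv\<^bsub>G\<^esub> b = inv\<^bsub>G\<^esub> a" using assms by simp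
  have "m = inv\<^bsub>G\<^esub> b \<otimes>\<^bsub>G\<^esub> inv\<^bsub>G\<^esub> a \<otimes>\<^bsub>G\<^esub> b" using 1 unfolding 2 .
  then show ?thesis using assms by (simp add: inv_mult_group m_assoc)
qed

lemma vh_gen:
  assumes v: "vh G Hd n vs" and i: "1 \<le> i" "i < n"
  shows "vh G Hd n (bgen G act i vs)" "vh G Hd n (bgen_inv G act i vs)"
proof -
  obtain c v1 where ec: "vs!(i-1) = (c,v1)" by fastforce
  obtain d v2 where ed: "vs!i = (d,v2)" by fastforce
  have vi: "fst (vs!(i-1)) \<in> carrier G \<and> snd (vs!(i-1)) \<in> Hd (fst (vs!(i-1)))"
    "fst (vs!i) \<in> carrier G \<and> snd (vs!i) \<in> Hd (fst (vs!i))"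
    using v i unfolding vh_def by auto
  have cc: "c \<in> carrier G" "v1 \<in> Hd c" "d \<in> carrier G" "v2 \<in> Hd d" using vi ec ed by auto
  have bv: "bgen G act i vs = vs[i - 1 := (c \<otimes>\<^bsub>G\<^esub> d \<otimes>\<^bsub>G\<^esub> inv\<^bsub>G\<^esub> c, act c v2), i := (c, v1)]"
    using ec ed by (simp add: bgen_def)
  have bv2: "bgen_inv G act i vs = vs[i - 1 := (d, v2), i := (inv\<^bsub>G\<^esub> d \<otimes>\<^bsub>G\<^esub> c \<otimes>\<^bsub>G\<^esub> d, act (inv\<^bsub>G\<^esub> d) v1)]"
    using ec ed by (simp add: bgen_inv_def)
  have h1: "act c v2 \<in> Hd (c \<otimes>\<^bsub>G\<^esub> d \<otimes>\<^bsub>G\<^esub> inv\<^bsub>G\<^esub> c)" using act_in cc by blast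
  have h2: "act (inv\<^bsub>G\<^esub> d) v1 \<in> Hd (inv\<^bsub>G\<^esub> d \<otimes>\<^bsub>G\<^esub> c \<otimes>\<^bsub>G\<^esub> d)"
    using act_in[of "inv\<^bsub>G\<^esub> d" c v1] cc by simp
  show "vh G Hd n (bgen G act i vs)"
    unfolding bv vh_def using v cc h1 i unfolding vh_def by (auto simp: nth_list_update)
  show "vh G Hd n (bgen_inv G act i vs)"
    unfolding bv2 vh_def using v cc h2 i unfolding vh_def by (auto simp: nth_list_update)
qed

lemma dh_gen:
  fixes xs :: "('g \<times> ('v \<Rightarrow> 'k::zero)) list"
  assumes x: "dh G Hd n xs" and i: "1 \<le> i" "i < n"
  shows "dh G Hd n (bgen G (dual_act G act) i xs)" "dh G Hd n (bgen_inv G (dual_act G act) i xs)"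
proof -
  obtain a x1 where ea: "xs!(i-1) = (a,x1)" by fastforce
  obtain b x2 where eb: "xs!i = (b,x2)" by fastforce
  have xi: "fst (xs!(i-1)) \<in> carrier G \<and> (\<forall>m'\<in>carrier G. m' \<noteq> inv\<^bsub>G\<^esub> (fst (xs!(i-1))) \<longrightarrow> (\<forall>v\<in>Hd m'. snd (xs!(i-1)) v = 0))"
    "fst (xs!i) \<in> carrier G \<and> (\<forall>m'\<in>carrier G. m' \<noteq> inv\<^bsub>G\<^esub> (fst (xs!i)) \<longrightarrow> (\<forall>v\<in>Hd m'. snd (xs!i) v = 0))"
    using x i unfolding dh_def by auto
  have ca: "a \<in> carrier G" "b \<in> carrier G" using xi ea eb by auto
  have va: "\<And>m' v. m' \<in> carrier G \<Longrightarrow> m' \<noteq> inv\<^bsub>G\<^esub> a \<Longrightarrow> v \<in> Hd m' \<Longrightarrow> x1 v = 0"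
    using xi ea by auto
  have vb: "\<And>m' v. m' \<in> carrier G \<Longrightarrow> m' \<noteq> inv\<^bsub>G\<^esub> b \<Longrightarrow> v \<in> Hd m' \<Longrightarrow> x2 v = 0"
    using xi eb by auto
  have bx: "bgen G (dual_act G act) i xs = xs[i - 1 := (a \<otimes>\<^bsub>G\<^esub> b \<otimes>\<^bsub>G\<^esub> inv\<^bsub>G\<^esub> a, dual_act G act a x2), i := (a, x1)]"
    using ea eb by (simp add: bgen_def)
  have bx2: "bgen_inv G (dual_act G act) i xs = xs[i - 1 := (b, x2), i := (inv\<^bsub>G\<^esub> b \<otimes>\<^bsub>G\<^esub> a \<otimes>\<^bsub>G\<^esub> b, dual_act G act (inv\<^bsub>G\<^esub> b) x1)]"
    using ea eb by (simp add: bgen_inv_def)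
  have h1: "\<forall>m'\<in>carrier G. m' \<noteq> inv\<^bsub>G\<^esub> (a \<otimes>\<^bsub>G\<^esub> b \<otimes>\<^bsub>G\<^esub> inv\<^bsub>G\<^esub> a) \<longrightarrow> (\<forall>v\<in>Hd m'. dual_act G act a x2 v = 0)"
  proof (intro ballI impI)
    fix m' v assume m: "m' \<in> carrier G" "m' \<noteq> inv\<^bsub>G\<^esub> (a \<otimes>\<^bsub>G\<^esub> b \<otimes>\<^bsub>G\<^esub> inv\<^bsub>G\<^esub> a)" "v \<in> Hd m'"
    have "act (inv\<^bsub>G\<^esub> a) v \<in> Hd (inv\<^bsub>G\<^esub> a \<otimes>\<^bsub>G\<^esub> m' \<otimes>\<^bsub>G\<^esub> inv\<^bsub>G\<^esub> (inv\<^bsub>G\<^esub> a))"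
      using act_in[of "inv\<^bsub>G\<^esub> a" m' v] m ca by simp
    moreover have "inv\<^bsub>G\<^esub> a \<otimes>\<^bsub>G\<^esub> m' \<otimes>\<^bsub>G\<^esub> inv\<^bsub>G\<^esub> (inv\<^bsub>G\<^esub> a) \<noteq> inv\<^bsub>G\<^esub> b"
      using grp1[OF ca m(1)] m(2) by blast
    ultimately show "dual_act G act a x2 v = 0" unfolding dual_act_def
      using vb[of "inv\<^bsub>G\<^esub> a \<otimes>\<^bsub>G\<^esub> m' \<otimes>\<^bsub>G\<^esub> a"] ca m by simp
  qed
  have h2: "\<forall>m'\<in>carrier G. m' \<noteq> inv\<^bsub>G\<^esub> (inv\<^bsub>G\<^esub> b \<otimes>\<^bsub>G\<^esub> a \<otimes>\<^bsub>G\<^esub> b) \<longrightarrow> (\<forall>v\<in>Hd m'. dual_act G act (inv\<^bsub>G\<^esub> b) x1 v = 0)"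
  proof (intro ballI impI)
    fix m' v assume m: "m' \<in> carrier G" "m' \<noteq> inv\<^bsub>G\<^esub> (inv\<^bsub>G\<^esub> b \<otimes>\<^bsub>G\<^esub> a \<otimes>\<^bsub>G\<^esub> b)" "v \<in> Hd m'"
    have "act (inv\<^bsub>G\<^esub> (inv\<^bsub>G\<^esub> b)) v \<in> Hd (inv\<^bsub>G\<^esub> (inv\<^bsub>G\<^esub> b) \<otimes>\<^bsub>G\<^esub> m' \<otimes>\<^bsub>G\<^esub> inv\<^bsub>G\<^esub> (inv\<^bsub>G\<^esub> (inv\<^bsub>G\<^esub> b)))"
      using act_in[of "inv\<^bsub>G\<^esub> (inv\<^bsub>G\<^esub> b)" m' v] m ca by simp
    moreover have "inv\<^bsub>G\<^esub> (inv\<^bsub>G\<^esub> b) \<otimes>\<^bsub>G\<^esub> m' \<otimes>\<^bsub>G\<^esub> inv\<^bsub>G\<^esub> (inv\<^bsub>G\<^esub> (inv\<^bsub>G\<^esub> b)) \<noteq> inv\<^bsub>G\<^esub> a"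
      using grp2[OF ca m(1)] m(2) by blast
    ultimately show "dual_act G act (inv\<^bsub>G\<^esub> b) x1 v = 0" unfolding dual_act_def
      using va[of "inv\<^bsub>G\<^esub> (inv\<^bsub>G\<^esub> b) \<otimes>\<^bsub>G\<^esub> m' \<otimes>\<^bsub>G\<^esub> inv\<^bsub>G\<^esub> (inv\<^bsub>G\<^esub> (inv\<^bsub>G\<^esub> b))"] ca m by simp
  qed
  have c1: "a \<otimes>\<^bsub>G\<^esub> b \<otimes>\<^bsub>G\<^esub> inv\<^bsub>G\<^esub> a \<in> carrier G" "inv\<^bsub>G\<^esub> b \<otimes>\<^bsub>G\<^esub> a \<otimes>\<^bsub>G\<^esub> b \<in> carrier G"
    using ca by auto
  show "dh G Hd n (bgen G (dual_act G act) i xs)"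
    unfolding bx dh_def using x i h1 c1 ca va unfolding dh_def
    by (auto simp: nth_list_update)
  show "dh G Hd n (bgen_inv G (dual_act G act) i xs)"
    unfolding bx2 dh_def using x i h2 c1 ca vb unfolding dh_def
    by (auto simp: nth_list_update)
qed


lemma dh_bact:
  fixes xs :: "('g \<times> ('v \<Rightarrow> 'k::zero)) list"
  shows "braid_word n w \<Longrightarrow> dh G Hd n xs \<Longrightarrow> dh G Hd n (bact G (dual_act G act) w xs)"
proof (induction w)
  case Nil then show ?case by (simp add: bact_def)
next
  case (Cons a w)
  obtain i s where a: "a = (i,s)" by fastforce
  have bw: "braid_word n w" and i: "1 \<le> i" "i < n" using Cons.prems a by (auto simp: braid_word_def)
  have "dh G Hd n (bact G (dual_act G act) w xs)" using Cons.IH bw Cons.prems by blast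
  then show ?case using dh_gen[OF _ i] a by (cases s) (simp_all add: bact_def)
qed

lemma vh_bact:
  shows "braid_word n w \<Longrightarrow> vh G Hd n vs \<Longrightarrow> vh G Hd n (bact G act w vs)"
proof (induction w)
  case Nil then show ?case by (simp add: bact_def)
next
  case (Cons a w)
  obtain i s where a: "a = (i,s)" by fastforce
  have bw: "braid_word n w" and i: "1 \<le> i" "i < n" using Cons.prems a by (auto simp: braid_word_def)
  have "vh G Hd n (bact G act w vs)" using Cons.IH bw Cons.prems by blast
  then show ?case using vh_gen[OF _ i] a by (cases s) (simp_all add: bact_def)
qed

lemma main:
  fixes xs :: "('g \<times> ('v \<Rightarrow> 'k::comm_ring_1)) list"
  shows "braid_word n w \<Longrightarrow> dh G Hd n xs \<Longrightarrow> vh G Hd n vs \<Longrightarrow>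
    pure_pair (bact G (dual_act G act) w xs) vs = pure_pair xs (bact G act (brefl n w) vs)"
proof (induction w arbitrary: vs)
  case Nil then show ?case by (simp add: bact_def brefl_def)
next
  case (Cons a w)
  obtain i s where a: "a = (i,s)" by fastforce
  have bw: "braid_word n w" and i: "1 \<le> i" "i < n" using Cons.prems a by (auto simp: braid_word_def)
  have d: "dh G Hd n (bact G (dual_act G act) w xs)" using dh_bact bw Cons.prems by blast
  have br: "brefl n (a # w) = brefl n w @ [(n - i, s)]" by (simp add: brefl_def a)
  have i2: "1 \<le> n - i" "n - i < n" using i by auto
  have nn: "n - (n - i) = i" using i by auto
  show ?case
  proof (cases s)
    case True
    have "pure_pair (bact G (dual_act G act) (a # w) xs) vs
        = pure_pair (bgen G (dual_act G act) i (bact G (dual_act G act) w xs)) vs"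
      by (simp add: bact_def a True)
    also have "\<dots> = pure_pair (bact G (dual_act G act) w xs) (bgen G act (n - i) vs)"
      by (rule pp_gen[OF d Cons.prems(3) i])
    also have "\<dots> = pure_pair xs (bact G act (brefl n w) (bgen G act (n - i) vs))"
      using Cons.IH[OF bw Cons.prems(2)] vh_gen(1)[OF Cons.prems(3) i2] by blast
    also have "\<dots> = pure_pair xs (bact G act (brefl n (a # w)) vs)"
      by (simp add: br bact_def True)
    finally show ?thesis .
  next
    case False
    have "pure_pair (bact G (dual_act G act) (a # w) xs) vs
        = pure_pair (bgen_inv G (dual_act G act) i (bact G (dual_act G act) w xs)) vs"
      by (simp add: bact_def a False)
    also have "\<dots> = pure_pair (bact G (dual_act G act) w xs) (bgen_inv G act (n - i) vs)"
      by (rule pp_gen_inv[OF d Cons.prems(3) i])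
    also have "\<dots> = pure_pair xs (bact G act (brefl n w) (bgen_inv G act (n - i) vs))"
      using Cons.IH[OF bw Cons.prems(2)] vh_gen(2)[OF Cons.prems(3) i2] by blast
    also have "\<dots> = pure_pair xs (bact G act (brefl n (a # w)) vs)"
      by (simp add: br bact_def False)
    finally show ?thesis .
  qed
qed

end


theorem proposition2p37:
  fixes G :: "('g, 'm) monoid_scheme"
    and scale :: "'k::field \<Rightarrow> 'v::ab_group_add \<Rightarrow> 'v"
    and act :: "'g \<Rightarrow> 'v \<Rightarrow> 'v"
    and Hd :: "'g \<Rightarrow> 'v set"
    and n :: nat and w :: bword
    and X :: "('k, 'g, 'v \<Rightarrow> 'k) tens" and V :: "('k, 'g, 'v) tens"
  assumes "group G" and "finite (carrier G)"
    and "\<exists>B. finite_dimensional_vector_space scale B"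
    and "\<forall>m \<in> carrier G. module.subspace scale (Hd m)"
    and "\<forall>v. \<exists>!f. (\<forall>m \<in> carrier G. f m \<in> Hd m) \<and> (\<forall>m. m \<notin> carrier G \<longrightarrow> f m = 0)
                 \<and> v = (\<Sum>m \<in> carrier G. f m)"
    and "\<forall>g \<in> carrier G. Vector_Spaces.linear scale scale (act g)"
    and "\<forall>v. act \<one>\<^bsub>G\<^esub> v = v"
    and "\<forall>g \<in> carrier G. \<forall>h \<in> carrier G. \<forall>v. act (g \<otimes>\<^bsub>G\<^esub> h) v = act g (act h v)"
    and "\<forall>g \<in> carrier G. \<forall>m \<in> carrier G. act g ` Hd m = Hd (g \<otimes>\<^bsub>G\<^esub> m \<otimes>\<^bsub>G\<^esub> inv\<^bsub>G\<^esub> g)"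
    and "braid_word n w"
    and "homog_tensor n (carrier G) (dual_deg G scale Hd) X"
    and "homog_tensor n (carrier G) Hd V"
  shows "tpair (tact G (dual_act G act) w X) V = tpair X (tact G act (brefl n w) V)"
proof -
  interpret gm G act Hd using assms(1,8,9) by (simp add: gm_def gm_axioms_def)
  have DX: "dh G Hd n xs" if "(c, xs) \<in> set X" for c xs
  proof -
    have h: "length xs = n \<and> (\<forall>(g, x) \<in> set xs. g \<in> carrier G \<and> x \<in> dual_deg G scale Hd g)"
      using assms(11) that unfolding homog_tensor_def by fastforce
    show ?thesis unfolding dh_def
    proof (intro conjI allI impI)
      show "length xs = n" using h by simp
      fix j assume j: "j < n"
      then have m: "xs ! j \<in> set xs" using h by simp
      obtain g x where e: "xs ! j = (g, x)" by fastforce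
      show "fst (xs ! j) \<in> carrier G" using h m e by auto
      show "\<forall>m'\<in>carrier G. m' \<noteq> inv\<^bsub>G\<^esub> fst (xs ! j) \<longrightarrow> (\<forall>v\<in>Hd m'. snd (xs ! j) v = 0)"
        using h m e unfolding dual_deg_def by auto
    qed
  qed
  have DV: "vh G Hd n vs" if "(d, vs) \<in> set V" for d vs
  proof -
    have h: "length vs = n \<and> (\<forall>(g, v) \<in> set vs. g \<in> carrier G \<and> v \<in> Hd g)"
      using assms(12) that unfolding homog_tensor_def by fastforce
    show ?thesis unfolding vh_def
    proof (intro conjI allI impI)
      show "length vs = n" using h by simp
      fix j assume j: "j < n"
      then have m: "vs ! j \<in> set vs" using h by simp
      obtain g v where e: "vs ! j = (g, v)" by fastforce
      show "fst (vs ! j) \<in> carrier G" using h m e by auto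
      show "snd (vs ! j) \<in> Hd (fst (vs ! j))" using h m e by auto
    qed
  qed
  have P: "(\<Sum>(d, vs)\<leftarrow>V. c * d * pure_pair (bact G (dual_act G act) w xs) vs) =
          (\<Sum>(d, vs)\<leftarrow>V. c * d * pure_pair xs (bact G act (brefl n w) vs))" if cx: "(c, xs) \<in> set X" for c xs
  proof (rule arg_cong[where f=sum_list], rule map_cong[OF refl])
    fix dv assume dv: "dv \<in> set V"
    obtain d vs where e2: "dv = (d, vs)" by fastforce
    show "(case dv of (d, vs) \<Rightarrow> c * d * pure_pair (bact G (dual_act G act) w xs) vs) =
          (case dv of (d, vs) \<Rightarrow> c * d * pure_pair xs (bact G act (brefl n w) vs))"
      using main[OF assms(10) DX[OF cx] DV[OF dv[unfolded e2]]] e2 by simp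
  qed
  have Q: "(\<Sum>(d, vs)\<leftarrow>map (\<lambda>(c, t). (c, bact G act (brefl n w) t)) V. c * d * pure_pair xs vs)
     = (\<Sum>(d, vs)\<leftarrow>V. c * d * pure_pair xs (bact G act (brefl n w) vs))" for c xs
    by (simp add: map_map comp_def case_prod_unfold)
  have Q2: "sum_list (map ((\<lambda>(d, vs). c * d * pure_pair xs vs) \<circ> (\<lambda>(c, t). (c, bact G act (brefl n w) t))) V)
     = (\<Sum>(d, vs)\<leftarrow>V. c * d * pure_pair xs (bact G act (brefl n w) vs))" for c xs
    by (simp add: comp_def case_prod_unfold)
  show ?thesis
    unfolding tpair_def tact_def map_map
    by (rule arg_cong[where f=sum_list], rule map_cong[OF refl]) (auto simp: P Q2)
qed

end
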